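(* There is a polynomial $P$ such that for every MEMDP $\Gamma=(Q,A,E,(\delta_e)_{e\in E})$ with rational transition probabilities there is a function $\varepsilon\mapsto m(\Gamma,\varepsilon)\in\mathbb N$ satisfying, for all $0<\varepsilon<1$, $m(\Gamma,\varepsilon)\le P(k,2^l,x)$ where $k=|E|$, $l$ is the maximum number of bits needed to write any transition probability of $\Gamma$ (numerator and denominator in binary), and $x=\lceil\log_2(1/\varepsilon)\rceil$; and such that for every prior $b\in\mathcal D(E)$, every state $q\in Q$, every strategy $\sigma\in\mathrm{Strat}(Q,A)$ and every environment $e\in E$: $$\mathbb P^\sigma_q\big[\Gamma[e],\ \{\rho:\mathrm{nb}_{\mathrm{dstg}}(\rho)\ge m(\Gamma,\varepsilon)\}\cap \mathrm{NeverSmallBelief}(b,\varepsilon)\big]\le\varepsilon .$$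
   Context: For a set $X$, $\mathcal D(X)$ is the set of distributions on $X$ (countable support, summing to 1). An MDP is $G=(Q,A,\delta)$ with $Q,A$ finite non-empty and $\delta:Q\times A\to\mathcal D(Q)$; finite runs are in $Q\cdot(A\cdot Q)^*$, infinite runs in $(Q\cdot A)^\omega$; a strategy is $\sigma:Q\cdot(A\cdot Q)^*\to\mathcal D(A)$, and $\mathbb P^\sigma_q[G,\cdot]$ is the induced probability measure on infinite runs from $q$ (the cylinder of $q_0(a_1,q_1)\cdots(a_n,q_n)$ has probability $[q_0=q]\prod_i\sigma(\text{prefix up to }q_{i-1})(a_i)\delta(q_{i-1},a_i)(q_i)$). An MEMDP is $\Gamma=(Q,A,E,(\delta_e)_{e\in E})$ with $E$ finite non-empty and each $\Gamma[e]=(Q,A,\delta_e)$ an MDP. A pair $(q,a)$ is $(e,e')$-distinguishing ($e\ne e'$) if $\delta_e(q,a)\ne\delta_{e'}(q,a)$; $\mathrm{Dstg}(\Gamma)$ is the set of pairs that are $(e,e')$-distinguishing for some $e\ne e'$. Belief update: for $b\in\mathcal D(E)$, $p[b,q,a](q'):=\sum_e b(e)\delta_e(q,a)(q')$, and if $p[b,q,a](q')>0$, $\lambda[b,q,a,q'](e):=b(e)\delta_e(q,a)(q')/p[b,q,a](q')$ (arbitrary distribution otherwise). The likelihood map is $\mathrm{lk}_b(q):=b$ and $\mathrm{lk}_b(\rho\cdot(a,q')):=\lambda[\mathrm{lk}_b(\rho),\mathrm{last}(\rho),a,q']$. For an infinite run $\rho$, $\mathrm{nb}_{\mathrm{dstg}}(\rho)\in\mathbb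 N\cup\{\infty\}$ is the number of positions $i$ with $(q_i,a_i)\in\mathrm{Dstg}(\Gamma)$, writing $\rho=(q_0,a_0)(q_1,a_1)\cdots$. $\mathrm{NeverSmallBelief}(b,\varepsilon)$ is the set of infinite runs all of whose finite prefixes $\pi\in Q\cdot(A\cdot Q)^*$ satisfy $\mathrm{lk}_b(\pi)(e')>\varepsilon$ for all $e'\in E$. *)

theory Defs
  imports "HOL-Probability.Probability"
begin

(* A finite run q0 (a1,q1) ... (an,qn) is the pair (q0, [(a1,q1),...,(an,qn)]).
   An infinite run (q0,a0)(q1,a1)... is a stream of (state, action) pairs. *)

type_synonym frun = "nat \<times> (nat \<times> nat) list"
type_synonym irun = "(nat \<times> nat) stream"

definition is_distr :: "nat set \<Rightarrow> (nat \<Rightarrow> real) \<Rightarrow> bool" where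
  "is_distr X d \<longleftrightarrow> (\<forall>x. 0 \<le> d x) \<and> (\<forall>x. x \<notin> X \<longrightarrow> d x = 0) \<and> (\<Sum>x\<in>X. d x) = 1"

definition is_MEMDP ::
  "nat set \<Rightarrow> nat set \<Rightarrow> nat set \<Rightarrow> (nat \<Rightarrow> nat \<Rightarrow> nat \<Rightarrow> nat \<Rightarrow> rat) \<Rightarrow> bool" where
  "is_MEMDP Q A E \<delta> \<longleftrightarrow>
     finite Q \<and> Q \<noteq> {} \<and> finite A \<and> A \<noteq> {} \<and> finite E \<and> E \<noteq> {} \<and>
     (\<forall>e\<in>E. \<forall>q\<in>Q. \<forall>a\<in>A. is_distr Q (\<lambda>q'. of_rat (\<delta> e q a q')))"

definition is_frun :: "nat set \<Rightarrow> nat set \<Rightarrow> frun \<Rightarrow> bool" where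
  "is_frun Q A \<rho> \<longleftrightarrow> fst \<rho> \<in> Q \<and> (\<forall>(a,q')\<in>set (snd \<rho>). a \<in> A \<and> q' \<in> Q)"

definition is_strategy :: "nat set \<Rightarrow> nat set \<Rightarrow> (frun \<Rightarrow> nat \<Rightarrow> real) \<Rightarrow> bool" where
  "is_strategy Q A \<sigma> \<longleftrightarrow> (\<forall>\<rho>. is_frun Q A \<rho> \<longrightarrow> is_distr A (\<sigma> \<rho>))"

definition cyl :: "frun \<Rightarrow> irun set" where
  "cyl \<rho> = {\<omega>. fst (\<omega> !! 0) = fst \<rho> \<and>
       (\<forall>i < length (snd \<rho>). snd (\<omega> !! i) = fst (snd \<rho> ! i) \<and>
                               fst (\<omega> !! Suc i) = snd (snd \<rho> ! i))}"

definition state_before :: "frun \<Rightarrow> nat \<Rightarrow> nat" where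
  "state_before \<rho> i = (if i = 0 then fst \<rho> else snd (snd \<rho> ! (i - 1)))"

definition cyl_prob ::
  "(nat \<Rightarrow> nat \<Rightarrow> nat \<Rightarrow> rat) \<Rightarrow> (frun \<Rightarrow> nat \<Rightarrow> real) \<Rightarrow> nat \<Rightarrow> frun \<Rightarrow> real" where
  "cyl_prob d \<sigma> q \<rho> =
     (if fst \<rho> = q then 1 else 0) *
     (\<Prod>i < length (snd \<rho>).
        \<sigma> (fst \<rho>, take i (snd \<rho>)) (fst (snd \<rho> ! i)) *
        of_rat (d (state_before \<rho> i) (fst (snd \<rho> ! i)) (snd (snd \<rho> ! i))))"

(* M is the probability measure P^sigma_q[G, .] on infinite runs of the MDP G
   with transition function d: the (unique) probability measure on the product
   sigma-algebra of streams whose cylinders have the prescribed probabilities *)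
definition is_run_measure ::
  "(nat \<Rightarrow> nat \<Rightarrow> nat \<Rightarrow> rat) \<Rightarrow> (frun \<Rightarrow> nat \<Rightarrow> real) \<Rightarrow> nat \<Rightarrow> irun measure \<Rightarrow> bool" where
  "is_run_measure d \<sigma> q M \<longleftrightarrow>
     prob_space M \<and> sets M = sets (stream_space (count_space UNIV)) \<and>
     (\<forall>\<rho>. measure M (cyl \<rho>) = cyl_prob d \<sigma> q \<rho>)"

definition Dstg ::
  "nat set \<Rightarrow> nat set \<Rightarrow> nat set \<Rightarrow> (nat \<Rightarrow> nat \<Rightarrow> nat \<Rightarrow> nat \<Rightarrow> rat) \<Rightarrow> (nat \<times> nat) set" where
  "Dstg Q A E \<delta> = {(q,a). q \<in> Q \<and> a \<in> A \<and>
      (\<exists>e\<in>E. \<exists>e'\<in>E. e \<noteq> e' \<and> (\<lambda>q'. \<delta> e q a q') \<noteq> (\<lambda>q'. \<delta> e' q a q'))}"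

definition nb_dstg ::
  "nat set \<Rightarrow> nat set \<Rightarrow> nat set \<Rightarrow> (nat \<Rightarrow> nat \<Rightarrow> nat \<Rightarrow> nat \<Rightarrow> rat) \<Rightarrow> irun \<Rightarrow> enat" where
  "nb_dstg Q A E \<delta> \<omega> =
     (let S = {i. \<omega> !! i \<in> Dstg Q A E \<delta>} in if finite S then enat (card S) else \<infinity>)"

definition bel_p ::
  "nat set \<Rightarrow> (nat \<Rightarrow> nat \<Rightarrow> nat \<Rightarrow> nat \<Rightarrow> rat) \<Rightarrow> (nat \<Rightarrow> real) \<Rightarrow> nat \<Rightarrow> nat \<Rightarrow> nat \<Rightarrow> real" where
  "bel_p E \<delta> b q a q' = (\<Sum>e\<in>E. b e * of_rat (\<delta> e q a q'))"

(* when the observation has probability 0 the belief is left unchanged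
   (the paper allows an arbitrary distribution here) *)
definition bel_upd ::
  "nat set \<Rightarrow> (nat \<Rightarrow> nat \<Rightarrow> nat \<Rightarrow> nat \<Rightarrow> rat) \<Rightarrow> (nat \<Rightarrow> real) \<Rightarrow> nat \<Rightarrow> nat \<Rightarrow> nat \<Rightarrow> (nat \<Rightarrow> real)" where
  "bel_upd E \<delta> b q a q' =
     (if bel_p E \<delta> b q a q' > 0
      then (\<lambda>e. b e * of_rat (\<delta> e q a q') / bel_p E \<delta> b q a q')
      else b)"

fun lk_aux ::
  "nat set \<Rightarrow> (nat \<Rightarrow> nat \<Rightarrow> nat \<Rightarrow> nat \<Rightarrow> rat) \<Rightarrow> (nat \<Rightarrow> real) \<Rightarrow> nat \<Rightarrow> (nat \<times> nat) list \<Rightarrow> (nat \<Rightarrow> real)" where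
  "lk_aux E \<delta> b q [] = b"
| "lk_aux E \<delta> b q ((a,q') # ps) = lk_aux E \<delta> (bel_upd E \<delta> b q a q') q' ps"

definition lk ::
  "nat set \<Rightarrow> (nat \<Rightarrow> nat \<Rightarrow> nat \<Rightarrow> nat \<Rightarrow> rat) \<Rightarrow> (nat \<Rightarrow> real) \<Rightarrow> frun \<Rightarrow> (nat \<Rightarrow> real)" where
  "lk E \<delta> b \<rho> = lk_aux E \<delta> b (fst \<rho>) (snd \<rho>)"

definition prefix_run :: "irun \<Rightarrow> nat \<Rightarrow> frun" where
  "prefix_run \<omega> n = (fst (\<omega> !! 0), map (\<lambda>i. (snd (\<omega> !! i), fst (\<omega> !! Suc i))) [0..<n])"

definition NeverSmallBelief ::
  "nat set \<Rightarrow> (nat \<Rightarrow> nat \<Rightarrow> nat \<Rightarrow> nat \<Rightarrow> rat) \<Rightarrow> (nat \<Rightarrow> real) \<Rightarrow> real \<Rightarrow> irun set" where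
  "NeverSmallBelief E \<delta> b \<epsilon> =
     {\<omega>. \<forall>n. \<forall>e'\<in>E. lk E \<delta> b (prefix_run \<omega> n) e' > \<epsilon>}"

fun bitlen :: "nat \<Rightarrow> nat" where
  "bitlen n = (if n < 2 then 1 else Suc (bitlen (n div 2)))"

definition rat_bits :: "rat \<Rightarrow> nat" where
  "rat_bits r = (case quotient_of r of (p, d) \<Rightarrow> bitlen (nat \<bar>p\<bar>) + bitlen (nat d))"

definition max_bits ::
  "nat set \<Rightarrow> nat set \<Rightarrow> nat set \<Rightarrow> (nat \<Rightarrow> nat \<Rightarrow> nat \<Rightarrow> nat \<Rightarrow> rat) \<Rightarrow> nat" where
  "max_bits Q A E \<delta> = Max {rat_bits (\<delta> e q a q') | e q a q'. e \<in> E \<and> q \<in> Q \<and> a \<in> A \<and> q' \<in> Q}"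

definition poly3 :: "nat \<Rightarrow> (nat \<Rightarrow> nat \<Rightarrow> nat \<Rightarrow> real) \<Rightarrow> real \<Rightarrow> real \<Rightarrow> real \<Rightarrow> real" where
  "poly3 D c y1 y2 y3 = (\<Sum>i<D. \<Sum>j<D. \<Sum>h<D. c i j h * y1 ^ i * y2 ^ j * y3 ^ h)"

end

theory Submission
  imports Defs
begin

definition snoc :: "frun \<Rightarrow> nat \<Rightarrow> nat \<Rightarrow> frun" where
  "snoc \<rho> a q' = (fst \<rho>, snd \<rho> @ [(a,q')])"

definition lastst :: "frun \<Rightarrow> nat" where
  "lastst \<rho> = state_before \<rho> (length (snd \<rho>))"

lemma state_before_snoc:
  "i \<le> length (snd \<rho>) \<Longrightarrow> state_before (snoc \<rho> a q') i = state_before \<rho> i"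
  by (auto simp: state_before_def snoc_def nth_append)

lemma lastst_snoc: "lastst (snoc \<rho> a q') = q'"
  by (simp add: lastst_def state_before_def snoc_def nth_append)

lemma lastst_alt: "lastst \<rho> = (if snd \<rho> = [] then fst \<rho> else snd (last (snd \<rho>)))"
  by (simp add: lastst_def state_before_def last_conv_nth)

lemma frun_snoc_induct:
  assumes "\<And>q0. P (q0,[])" "\<And>\<rho> a q'. P \<rho> \<Longrightarrow> P (snoc \<rho> a q')"
  shows "P \<rho>"
proof -
  obtain q0 ps where r: "\<rho> = (q0, ps)" by (cases \<rho>)
  have "P (q0, ps)"
  proof (induction ps rule: rev_induct)
    case Nil then show ?case using assms(1) .
  next
    case (snoc x xs)
    obtain a q' where "x = (a,q')" by (cases x)
    then show ?case using assms(2)[OF snoc.IH, of a q'] by (simp add: snoc_def)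
  qed
  then show ?thesis using r by simp
qed

lemma cyl_prob_snoc:
  "cyl_prob d \<sigma> q (snoc \<rho> a q') = cyl_prob d \<sigma> q \<rho> * (\<sigma> \<rho> a * of_rat (d (lastst \<rho>) a q'))"
proof -
  obtain q0 ps where r: "\<rho> = (q0, ps)" by (cases \<rho>)
  let ?f = "\<lambda>\<rho> i. \<sigma> (fst \<rho>, take i (snd \<rho>)) (fst (snd \<rho> ! i)) *
        of_rat (d (state_before \<rho> i) (fst (snd \<rho> ! i)) (snd (snd \<rho> ! i)))"
  have "(\<Prod>i < length (snd (snoc \<rho> a q')). ?f (snoc \<rho> a q') i) =
        (\<Prod>i < length ps. ?f (snoc \<rho> a q') i) * ?f (snoc \<rho> a q') (length ps)"
    by (simp add: r snoc_def)
  also have "(\<Prod>i < length ps. ?f (snoc \<rho> a q') i) = (\<Prod>i < length ps. ?f \<rho> i)"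
  proof (rule prod.cong)
    fix i assume "i \<in> {..<length ps}"
    then show "?f (snoc \<rho> a q') i = ?f \<rho> i"
      using state_before_snoc[of i \<rho> a q'] by (simp add: r snoc_def nth_append)
  qed simp
  also have "?f (snoc \<rho> a q') (length ps) = \<sigma> \<rho> a * of_rat (d (lastst \<rho>) a q')"
    using state_before_snoc[of "length ps" \<rho> a q'] by (simp add: r snoc_def lastst_def)
  finally show ?thesis by (simp add: cyl_prob_def r snoc_def)
qed

lemma lk_aux_snoc:
  "lk_aux E \<delta> b q (ps @ [(a,q')]) =
     bel_upd E \<delta> (lk_aux E \<delta> b q ps) (if ps = [] then q else snd (last ps)) a q'"
  by (induction ps arbitrary: b q) auto

lemma lk_snoc: "lk E \<delta> b (snoc \<rho> a q') = bel_upd E \<delta> (lk E \<delta> b \<rho>) (lastst \<rho>) a q'"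
  by (simp add: lk_def snoc_def lk_aux_snoc lastst_alt)

definition cntf :: "(nat \<Rightarrow> nat \<Rightarrow> bool) \<Rightarrow> frun \<Rightarrow> nat" where
  "cntf P \<rho> = card {i. i < length (snd \<rho>) \<and> P (state_before \<rho> i) (fst (snd \<rho> ! i))}"

lemma cntf_snoc: "cntf P (snoc \<rho> a q') = cntf P \<rho> + (if P (lastst \<rho>) a then 1 else 0)"
proof -
  let ?n = "length (snd \<rho>)"
  let ?S = "{i. i < ?n \<and> P (state_before \<rho> i) (fst (snd \<rho> ! i))}"
  have "{i. i < length (snd (snoc \<rho> a q')) \<and> P (state_before (snoc \<rho> a q') i) (fst (snd (snoc \<rho> a q') ! i))}
      = ?S \<union> (if P (lastst \<rho>) a then {?n} else {})"
    using state_before_snoc[of _ \<rho> a q']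
    by (auto simp: snoc_def nth_append lastst_def less_Suc_eq)
  moreover have "finite ?S" by simp
  ultimately show ?thesis by (simp add: cntf_def card_insert_if)
qed

lemma cntf_empty[simp]: "cntf P (q0, []) = 0"
  by (simp add: cntf_def)

definition nsbf :: "nat set \<Rightarrow> (nat \<Rightarrow> nat \<Rightarrow> nat \<Rightarrow> nat \<Rightarrow> rat) \<Rightarrow> (nat \<Rightarrow> real) \<Rightarrow> real \<Rightarrow> frun \<Rightarrow> bool" where
  "nsbf E \<delta> b \<epsilon> \<rho> = (\<forall>n \<le> length (snd \<rho>). \<forall>e'\<in>E. \<epsilon> < lk E \<delta> b (fst \<rho>, take n (snd \<rho>)) e')"

lemma nsbf_snoc:
  "nsbf E \<delta> b \<epsilon> (snoc \<rho> a q') \<longleftrightarrow> nsbf E \<delta> b \<epsilon> \<rho> \<and> (\<forall>e'\<in>E. \<epsilon> < lk E \<delta> b (snoc \<rho> a q') e')"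
  unfolding nsbf_def
  by (auto simp: snoc_def le_Suc_eq)

lemma nsbf_self: "nsbf E \<delta> b \<epsilon> \<rho> \<Longrightarrow> e' \<in> E \<Longrightarrow> \<epsilon> < lk E \<delta> b \<rho> e'"
  unfolding nsbf_def by (metis le_refl prod.collapse take_all)

lemma nsbf_empty: "nsbf E \<delta> b \<epsilon> (q0, []) \<longleftrightarrow> (\<forall>e'\<in>E. \<epsilon> < b e')"
  by (simp add: nsbf_def lk_def)


lemma bel_upd_sum:
  assumes "finite E" "sum b E = 1"
  shows "sum (bel_upd E \<delta> b q a q') E = 1"
proof (cases "bel_p E \<delta> b q a q' > 0")
  case True
  then have "sum (bel_upd E \<delta> b q a q') E = (\<Sum>e\<in>E. b e * of_rat (\<delta> e q a q')) / bel_p E \<delta> b q a q'"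
    by (simp add: bel_upd_def sum_divide_distrib)
  also have "\<dots> = 1" using True by (simp add: bel_p_def)
  finally show ?thesis .
next
  case False then show ?thesis using assms by (simp add: bel_upd_def)
qed

lemma lk_sum:
  assumes "finite E" "sum b E = 1"
  shows "sum (lk E \<delta> b \<rho>) E = 1"
proof (induction \<rho> rule: frun_snoc_induct)
  case (1 q0) then show ?case using assms by (simp add: lk_def)
next
  case (2 \<rho> a q') then show ?case using assms by (simp only: lk_snoc bel_upd_sum)
qed

lemma is_frun_snoc: "is_frun Q A (snoc \<rho> a q') \<longleftrightarrow> is_frun Q A \<rho> \<and> a \<in> A \<and> q' \<in> Q"
  by (auto simp: is_frun_def snoc_def)

lemma state_before_in:
  "state_before \<rho> i \<in> Q" if "is_frun Q A \<rho>" "i \<le> length (snd \<rho>)"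
proof (cases "i = 0")
  case True then show ?thesis using that by (simp add: is_frun_def state_before_def)
next
  case False
  then have "snd \<rho> ! (i - 1) \<in> set (snd \<rho>)" using that by (intro nth_mem) auto
  moreover have "\<forall>x\<in>set (snd \<rho>). snd x \<in> Q" using that(1) by (auto simp: is_frun_def)
  ultimately show ?thesis using False by (simp add: state_before_def)
qed

lemma lastst_in: "is_frun Q A \<rho> \<Longrightarrow> lastst \<rho> \<in> Q"
  by (simp add: lastst_def state_before_in)

definition V :: "nat set \<Rightarrow> nat set \<Rightarrow> nat \<Rightarrow> frun set" where
  "V Q A n = {\<rho>. is_frun Q A \<rho> \<and> length (snd \<rho>) = n}"

lemma V_0: "V Q A 0 = (\<lambda>q0. (q0, [])) ` Q"
  by (auto simp: V_def is_frun_def)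

lemma V_Suc: "V Q A (Suc n) = (\<lambda>(\<rho>,a,q'). snoc \<rho> a q') ` (V Q A n \<times> A \<times> Q)"
proof (intro set_eqI iffI)
  fix x assume "x \<in> V Q A (Suc n)"
  then obtain q0 ps where x: "x = (q0, ps)" "is_frun Q A (q0,ps)" "length ps = Suc n"
    by (cases x) (auto simp: V_def)
  then obtain ys y where ps: "ps = ys @ [y]" by (metis length_Suc_conv_rev)
  obtain a q' where y: "y = (a,q')" by (cases y)
  have "x = snoc (q0, ys) a q'" by (simp add: x ps y snoc_def)
  moreover have "is_frun Q A (snoc (q0, ys) a q')" using x ps y by (simp add: snoc_def)
  then have "is_frun Q A (q0, ys) \<and> a \<in> A \<and> q' \<in> Q" by (simp only: is_frun_snoc)
  moreover have "length ys = n" using x ps by simp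
  ultimately show "x \<in> (\<lambda>(\<rho>,a,q'). snoc \<rho> a q') ` (V Q A n \<times> A \<times> Q)"
    by (intro image_eqI[of _ _ "((q0,ys),a,q')"]) (auto simp: V_def)
next
  fix x assume "x \<in> (\<lambda>(\<rho>,a,q'). snoc \<rho> a q') ` (V Q A n \<times> A \<times> Q)"
  then show "x \<in> V Q A (Suc n)" by (auto simp: V_def is_frun_snoc) (simp add: snoc_def)
qed

lemma finite_V: "finite Q \<Longrightarrow> finite A \<Longrightarrow> finite (V Q A n)"
  by (induction n) (simp_all add: V_0 V_Suc)

lemma sum_V_Suc:
  assumes "finite Q" "finite A"
  shows "sum g (V Q A (Suc n)) = (\<Sum>\<rho>\<in>V Q A n. \<Sum>a\<in>A. \<Sum>q'\<in>Q. g (snoc \<rho> a q'))"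
proof -
  have inj: "inj_on (\<lambda>(\<rho>,a,q'). snoc \<rho> a q') (V Q A n \<times> A \<times> Q)"
    by (auto simp: inj_on_def snoc_def prod_eq_iff)
  have "sum g (V Q A (Suc n)) = (\<Sum>(\<rho>,a,q')\<in>V Q A n \<times> A \<times> Q. g (snoc \<rho> a q'))"
    unfolding V_Suc by (subst sum.reindex[OF inj]) (simp add: case_prod_beta')
  also have "\<dots> = (\<Sum>\<rho>\<in>V Q A n. \<Sum>(a,q')\<in>A \<times> Q. g (snoc \<rho> a q'))"
    by (subst sum.cartesian_product[symmetric]) (simp add: case_prod_beta')
  also have "\<dots> = (\<Sum>\<rho>\<in>V Q A n. \<Sum>a\<in>A. \<Sum>q'\<in>Q. g (snoc \<rho> a q'))"
    by (subst sum.cartesian_product[symmetric]) simp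
  finally show ?thesis .
qed

lemma bitlen_pos: "0 < bitlen n"
  by (subst bitlen.simps) simp

lemma bitlen_lt: "n < 2 ^ bitlen n"
proof (induction n rule: bitlen.induct)
  case (1 n)
  show ?case
  proof (cases "n < 2")
    case True then show ?thesis by (subst bitlen.simps) simp
  next
    case False
    then have "n div 2 < 2 ^ bitlen (n div 2)" using 1 by simp
    then show ?thesis using False by (subst bitlen.simps) simp
  qed
qed

lemma rat_denom_bound:
  assumes "rat_bits r \<le> l" "quotient_of r = (p, d)"
  shows "d < 2 ^ l"
proof -
  have "d > 0" using quotient_of_denom_pos[OF assms(2)] .
  have "bitlen (nat d) \<le> l" using assms bitlen_pos[of "nat \<bar>p\<bar>"] by (simp add: rat_bits_def)
  then have "nat d < 2 ^ l"
    using bitlen_lt[of "nat d"] by (meson less_le_trans one_le_numeral power_increasing)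
  then show ?thesis using \<open>d > 0\<close> by (metis nat_less_iff zero_less_power zero_less_numeral less_imp_le of_nat_numeral of_nat_power)
qed

lemma rat_diff:
  assumes "rat_bits r1 \<le> l" "rat_bits r2 \<le> l" "r1 \<noteq> r2"
  shows "1 / 4 ^ l \<le> \<bar>(of_rat r1 :: real) - of_rat r2\<bar>"
proof -
  obtain p1 d1 where q1: "quotient_of r1 = (p1, d1)" by (cases "quotient_of r1")
  obtain p2 d2 where q2: "quotient_of r2 = (p2, d2)" by (cases "quotient_of r2")
  have d1: "0 < d1" "d1 < 2 ^ l" using quotient_of_denom_pos[OF q1] rat_denom_bound[OF assms(1) q1] by auto
  have d2: "0 < d2" "d2 < 2 ^ l" using quotient_of_denom_pos[OF q2] rat_denom_bound[OF assms(2) q2] by auto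
  have r1: "(of_rat r1 :: real) = of_int p1 / of_int d1"
    using quotient_of_div[OF q1] by (simp add: of_rat_divide)
  have r2: "(of_rat r2 :: real) = of_int p2 / of_int d2"
    using quotient_of_div[OF q2] by (simp add: of_rat_divide)
  have ne: "p1 * d2 - p2 * d1 \<noteq> 0"
  proof
    assume "p1 * d2 - p2 * d1 = 0"
    then have "Fract p1 d1 = Fract p2 d2" using d1 d2 by (simp add: eq_rat)
    then show False using assms(3) quotient_of_div[OF q1] quotient_of_div[OF q2]
      by (simp add: Fract_of_int_quotient)
  qed
  then have num: "1 \<le> \<bar>real_of_int (p1 * d2 - p2 * d1)\<bar>" by linarith
  have "(of_rat r1 :: real) - of_rat r2 = real_of_int (p1 * d2 - p2 * d1) / (real_of_int d1 * real_of_int d2)"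
    using d1 d2 by (simp add: r1 r2 field_simps)
  then have eq: "\<bar>(of_rat r1 :: real) - of_rat r2\<bar> = \<bar>real_of_int (p1 * d2 - p2 * d1)\<bar> / (real_of_int d1 * real_of_int d2)"
    using d1 d2 by (simp add: abs_mult)
  have dd: "real_of_int d1 * real_of_int d2 \<le> 4 ^ l"
  proof -
    have "real_of_int d1 \<le> 2 ^ l" "real_of_int d2 \<le> 2 ^ l" using d1 d2
      by (metis less_imp_le of_int_le_iff of_int_numeral of_int_power)+
    then have "real_of_int d1 * real_of_int d2 \<le> 2 ^ l * 2 ^ l"
      using d1 d2 by (intro mult_mono) auto
    also have "\<dots> = 4 ^ l" by (simp flip: power_mult_distrib)
    finally show ?thesis .
  qed
  have "1 / 4 ^ l \<le> 1 / (real_of_int d1 * real_of_int d2)"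
    using dd d1 d2 by (intro divide_left_mono) auto
  also have "\<dots> \<le> \<bar>real_of_int (p1 * d2 - p2 * d1)\<bar> / (real_of_int d1 * real_of_int d2)"
    using num d1 d2 by (intro divide_right_mono) auto
  finally show ?thesis using eq by simp
qed

lemma hellinger:
  fixes p r :: "nat \<Rightarrow> real"
  assumes "finite Q" "\<And>x. x \<in> Q \<Longrightarrow> 0 \<le> p x" "\<And>x. x \<in> Q \<Longrightarrow> 0 \<le> r x"
    "sum p Q = 1" "sum r Q = 1" "j \<in> Q" "0 \<le> \<eta>" "\<eta> \<le> \<bar>p j - r j\<bar>"
  shows "(\<Sum>x\<in>Q. sqrt (p x * r x)) \<le> 1 - \<eta>^2 / 8"
proof -
  have le1: "p x \<le> 1 \<and> r x \<le> 1" if "x \<in> Q" for x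
  proof
    show "p x \<le> 1" using assms that member_le_sum[of x Q p] by auto
    show "r x \<le> 1" using assms that member_le_sum[of x Q r] by auto
  qed
  have sq: "(sqrt (p x) - sqrt (r x))^2 = p x + r x - 2 * sqrt (p x * r x)" if "x \<in> Q" for x
    using assms(2,3)[OF that] by (simp add: power2_eq_square algebra_simps real_sqrt_mult)
  have "(\<Sum>x\<in>Q. (sqrt (p x) - sqrt (r x))^2) = 2 - 2 * (\<Sum>x\<in>Q. sqrt (p x * r x))"
    using assms(4,5) by (simp add: sq sum.distrib sum_subtractf sum_distrib_left)
  moreover have "(sqrt (p j) - sqrt (r j))^2 \<le> (\<Sum>x\<in>Q. (sqrt (p x) - sqrt (r x))^2)"
    using assms(1,6) by (intro member_le_sum) auto
  moreover have "\<eta>^2 / 4 \<le> (sqrt (p j) - sqrt (r j))^2"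
  proof -
    have pj: "p j = sqrt (p j) ^ 2" "r j = sqrt (r j) ^ 2" using assms(2,3,6) by auto
    have "p j - r j = sqrt (p j) ^ 2 - sqrt (r j) ^ 2" using pj by simp
    also have "\<dots> = (sqrt (p j) - sqrt (r j)) * (sqrt (p j) + sqrt (r j))"
      by (simp add: power2_eq_square algebra_simps)
    finally have "p j - r j = (sqrt (p j) - sqrt (r j)) * (sqrt (p j) + sqrt (r j))" .
    then have "\<bar>p j - r j\<bar> = \<bar>sqrt (p j) - sqrt (r j)\<bar> * (sqrt (p j) + sqrt (r j))"
      using assms(2,3,6) by (simp add: abs_mult)
    also have "\<dots> \<le> \<bar>sqrt (p j) - sqrt (r j)\<bar> * 2"
    proof (intro mult_left_mono)
      have "sqrt (p j) \<le> 1" "sqrt (r j) \<le> 1" using le1[OF assms(6)] by auto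
      then show "sqrt (p j) + sqrt (r j) \<le> 2" by linarith
    qed simp
    finally have "\<eta> \<le> 2 * \<bar>sqrt (p j) - sqrt (r j)\<bar>" using assms(8) by simp
    then have "\<eta>^2 \<le> (2 * \<bar>sqrt (p j) - sqrt (r j)\<bar>)^2"
      using assms(7) by (intro power_mono) auto
    then show ?thesis by (simp add: power_mult_distrib)
  qed
  ultimately show ?thesis by linarith
qed


definition phi :: "nat set \<Rightarrow> nat \<Rightarrow> real \<Rightarrow> (nat \<Rightarrow> real) \<Rightarrow> (nat \<Rightarrow> nat) \<Rightarrow> real" where
  "phi E e c \<beta> Nf = (\<Sum>e'\<in>E-{e}. sqrt (\<beta> e' / \<beta> e) * (1/c) ^ (Nf e'))"

lemma memdp_distr:
  assumes "is_MEMDP Q A E \<delta>" "x \<in> E" "s \<in> Q" "a \<in> A"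
  shows "\<And>q'. 0 \<le> (of_rat (\<delta> x s a q') :: real)"
    "\<And>q'. q' \<notin> Q \<Longrightarrow> \<delta> x s a q' = 0"
    "(\<Sum>q'\<in>Q. (of_rat (\<delta> x s a q') :: real)) = 1"
  using assms unfolding is_MEMDP_def is_distr_def by auto

lemma sqrt_ratio_step:
  assumes "is_MEMDP Q A E \<delta>" "e \<in> E" "e' \<in> E" "s \<in> Q" "a \<in> A" "\<forall>x\<in>E. 0 < \<beta> x"
  shows "of_rat (\<delta> e s a q') * sqrt (bel_upd E \<delta> \<beta> s a q' e' / bel_upd E \<delta> \<beta> s a q' e)
       = sqrt (\<beta> e' / \<beta> e) * sqrt (of_rat (\<delta> e s a q') * of_rat (\<delta> e' s a q'))"
proof -
  let ?d = "\<lambda>x. (of_rat (\<delta> x s a q') :: real)"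
  have nn: "0 \<le> ?d x" if "x \<in> E" for x using memdp_distr(1)[OF assms(1) that assms(4,5)] .
  show ?thesis
  proof (cases "?d e = 0")
    case True then show ?thesis by simp
  next
    case False
    then have de: "?d e > 0" using nn[OF assms(2)] by simp
    have "\<beta> e * ?d e \<le> bel_p E \<delta> \<beta> s a q'"
    proof -
      have fE: "finite E" using assms(1) by (simp add: is_MEMDP_def)
      show ?thesis unfolding bel_p_def
      proof (rule member_le_sum[OF assms(2) _ fE])
        fix x assume "x \<in> E - {e}"
        then show "0 \<le> \<beta> x * ?d x" using nn[of x] assms(6) by (simp add: less_imp_le)
      qed
    qed
    moreover have "\<beta> e * ?d e > 0" using de assms(2,6) by simp
    ultimately have p: "bel_p E \<delta> \<beta> s a q' > 0" by linarith
    have "bel_upd E \<delta> \<beta> s a q' e' / bel_upd E \<delta> \<beta> s a q' e = (\<beta> e' / \<beta> e) * (?d e' / ?d e)"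
      using p de assms(2,6) by (simp add: bel_upd_def field_simps)
    then have "sqrt (bel_upd E \<delta> \<beta> s a q' e' / bel_upd E \<delta> \<beta> s a q' e) = sqrt (\<beta> e' / \<beta> e) * sqrt (?d e' / ?d e)"
      by (simp only: real_sqrt_mult)
    moreover have "?d e * sqrt (?d e' / ?d e) = sqrt (?d e * ?d e')"
    proof -
      have "?d e * ?d e' = (?d e)^2 * (?d e' / ?d e)" using de by (simp add: power2_eq_square field_simps)
      then have "sqrt (?d e * ?d e') = sqrt ((?d e)^2) * sqrt (?d e' / ?d e)" by (simp only: real_sqrt_mult)
      then show ?thesis using de by simp
    qed
    ultimately show ?thesis by (simp add: algebra_simps)
  qed
qed

lemma phi_step:
  assumes memdp: "is_MEMDP Q A E \<delta>" and eE: "e \<in> E" and sQ: "s \<in> Q" and aA: "a \<in> A"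
    and pos: "\<forall>x\<in>E. 0 < \<beta> x" and c0: "0 < c"
    and aff: "\<forall>e'\<in>E. \<delta> e s a \<noteq> \<delta> e' s a \<longrightarrow>
       (\<Sum>q'\<in>Q. sqrt (of_rat (\<delta> e s a q') * of_rat (\<delta> e' s a q'))) \<le> c"
  shows "(\<Sum>q'\<in>Q. of_rat (\<delta> e s a q') * phi E e c (bel_upd E \<delta> \<beta> s a q')
            (\<lambda>e'. Nf e' + (if \<delta> e s a \<noteq> \<delta> e' s a then 1 else 0))) \<le> phi E e c \<beta> Nf"
proof -
  let ?d = "\<lambda>x q'. (of_rat (\<delta> x s a q') :: real)"
  let ?D = "\<lambda>e'. (if \<delta> e s a \<noteq> \<delta> e' s a then 1 else 0) :: nat"
  let ?S = "\<lambda>e'. (\<Sum>q'\<in>Q. sqrt (?d e q' * ?d e' q'))"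
  have "(\<Sum>q'\<in>Q. ?d e q' * phi E e c (bel_upd E \<delta> \<beta> s a q') (\<lambda>e'. Nf e' + ?D e'))
      = (\<Sum>q'\<in>Q. \<Sum>e'\<in>E-{e}. (1/c)^(Nf e' + ?D e') * (?d e q' * sqrt (bel_upd E \<delta> \<beta> s a q' e' / bel_upd E \<delta> \<beta> s a q' e)))"
    unfolding phi_def sum_distrib_left by (intro sum.cong refl) (simp add: mult_ac)
  also have "\<dots> = (\<Sum>q'\<in>Q. \<Sum>e'\<in>E-{e}. (1/c)^(Nf e' + ?D e') * (sqrt (\<beta> e' / \<beta> e) * sqrt (?d e q' * ?d e' q')))"
    using sqrt_ratio_step[OF memdp eE _ sQ aA pos] by (intro sum.cong refl) auto
  also have "\<dots> = (\<Sum>e'\<in>E-{e}. (1/c)^(Nf e') * sqrt (\<beta> e' / \<beta> e) * ((1/c)^(?D e') * ?S e'))"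
    by (subst sum.swap, intro sum.cong refl) (simp add: sum_distrib_left power_add mult_ac)
  also have "\<dots> \<le> (\<Sum>e'\<in>E-{e}. (1/c)^(Nf e') * sqrt (\<beta> e' / \<beta> e) * 1)"
  proof (intro sum_mono mult_left_mono)
    fix e' assume e': "e' \<in> E - {e}"
    have "0 < \<beta> e'" "0 < \<beta> e" using pos e' eE by auto
    then show "0 \<le> (1/c)^(Nf e') * sqrt (\<beta> e' / \<beta> e)" using c0 by (intro mult_nonneg_nonneg) auto
    show "(1/c)^(?D e') * ?S e' \<le> 1"
    proof (cases "\<delta> e s a \<noteq> \<delta> e' s a")
      case True
      then have "?S e' \<le> c" using aff e' by auto
      then show ?thesis using True c0 by (simp add: field_simps)
    next
      case False
      then have "?S e' = (\<Sum>q'\<in>Q. ?d e q')"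
        using memdp_distr(1)[OF memdp eE sQ aA] by (intro sum.cong) (auto simp: real_sqrt_mult_self)
      also have "\<dots> = 1" using memdp_distr(3)[OF memdp eE sQ aA] .
      finally show ?thesis using False by simp
    qed
  qed
  also have "\<dots> = phi E e c \<beta> Nf" unfolding phi_def by (simp add: algebra_simps)
  finally show ?thesis .
qed


lemma phi_snoc_nonneg:
  assumes memdp: "is_MEMDP Q A E \<delta>" and eE: "e \<in> E" and sQ: "s \<in> Q" and aA: "a \<in> A"
    and pos: "\<forall>x\<in>E. 0 < \<beta> x" and c0: "0 < c"
  shows "0 \<le> of_rat (\<delta> e s a q') * phi E e c (bel_upd E \<delta> \<beta> s a q') Nf"
proof -
  have "of_rat (\<delta> e s a q') * phi E e c (bel_upd E \<delta> \<beta> s a q') Nf =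
     (\<Sum>e'\<in>E-{e}. (1/c)^(Nf e') * (of_rat (\<delta> e s a q') * sqrt (bel_upd E \<delta> \<beta> s a q' e' / bel_upd E \<delta> \<beta> s a q' e)))"
    unfolding phi_def sum_distrib_left by (intro sum.cong refl) (simp add: mult_ac)
  also have "\<dots> = (\<Sum>e'\<in>E-{e}. (1/c)^(Nf e') * (sqrt (\<beta> e' / \<beta> e) * sqrt (of_rat (\<delta> e s a q') * of_rat (\<delta> e' s a q'))))"
    using sqrt_ratio_step[OF memdp eE _ sQ aA pos] by (intro sum.cong refl) auto
  also have "\<dots> \<ge> 0"
  proof (intro sum_nonneg mult_nonneg_nonneg)
    fix e' assume e': "e' \<in> E - {e}"
    have "0 < \<beta> e'" "0 < \<beta> e" using pos e' eE by auto
    then show "0 \<le> sqrt (\<beta> e' / \<beta> e)" by simp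
    have "0 \<le> (of_rat (\<delta> e s a q') :: real)" "0 \<le> (of_rat (\<delta> e' s a q') :: real)"
      using memdp_distr(1)[OF memdp _ sQ aA] e' eE by auto
    then show "0 \<le> sqrt (of_rat (\<delta> e s a q') * of_rat (\<delta> e' s a q'))" by simp
  qed (use c0 in auto)
  finally show ?thesis .
qed

locale run_ctx =
  fixes Q A E :: "nat set" and \<delta> :: "nat \<Rightarrow> nat \<Rightarrow> nat \<Rightarrow> nat \<Rightarrow> rat" and b :: "nat \<Rightarrow> real"
    and q :: nat and \<sigma> :: "frun \<Rightarrow> nat \<Rightarrow> real" and e :: nat and \<epsilon> c :: real
  assumes memdp: "is_MEMDP Q A E \<delta>" and bd: "is_distr E b" and qQ: "q \<in> Q"
    and strat: "is_strategy Q A \<sigma>" and eE: "e \<in> E" and eps: "0 < \<epsilon>"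
    and c0: "0 < c" and c1: "c \<le> 1"
    and aff: "\<forall>s\<in>Q. \<forall>a\<in>A. \<forall>e'\<in>E. \<delta> e s a \<noteq> \<delta> e' s a \<longrightarrow>
       (\<Sum>q'\<in>Q. sqrt (of_rat (\<delta> e s a q') * of_rat (\<delta> e' s a q'))) \<le> c"
begin

definition Phi :: "frun \<Rightarrow> real" where
  "Phi \<rho> = phi E e c (lk E \<delta> b \<rho>) (\<lambda>e'. cntf (\<lambda>s a. \<delta> e s a \<noteq> \<delta> e' s a) \<rho>)"

definition cp :: "frun \<Rightarrow> real" where
  "cp \<rho> = cyl_prob (\<delta> e) \<sigma> q \<rho>"

definition w :: "frun \<Rightarrow> real" where
  "w \<rho> = (if nsbf E \<delta> b \<epsilon> \<rho> then cp \<rho> * Phi \<rho> else 0)"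

definition F :: "nat \<Rightarrow> real" where
  "F n = sum w (V Q A n)"

lemma finQ: "finite Q" and finA: "finite A" and finE: "finite E"
  using memdp by (auto simp: is_MEMDP_def)

lemma sigma_props:
  assumes "is_frun Q A \<rho>"
  shows "\<And>a. 0 \<le> \<sigma> \<rho> a" "\<And>a. a \<notin> A \<Longrightarrow> \<sigma> \<rho> a = 0" "sum (\<sigma> \<rho>) A = 1"
proof -
  have d: "is_distr A (\<sigma> \<rho>)" using strat assms unfolding is_strategy_def by blast
  show "\<And>a. 0 \<le> \<sigma> \<rho> a" "\<And>a. a \<notin> A \<Longrightarrow> \<sigma> \<rho> a = 0" "sum (\<sigma> \<rho>) A = 1"
    using d unfolding is_distr_def by auto
qed

lemma cp_empty: "cp (q0, []) = (if q0 = q then 1 else 0)"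
  by (simp add: cp_def cyl_prob_def)

lemma cp_snoc: "cp (snoc \<rho> a q') = cp \<rho> * (\<sigma> \<rho> a * of_rat (\<delta> e (lastst \<rho>) a q'))"
  by (simp add: cp_def cyl_prob_snoc)

lemma cp_nonneg: "is_frun Q A \<rho> \<Longrightarrow> 0 \<le> cp \<rho>"
proof (induction \<rho> rule: frun_snoc_induct)
  case (1 q0) then show ?case by (simp add: cp_empty)
next
  case (2 \<rho> a q')
  then have fr: "is_frun Q A \<rho>" "a \<in> A" "q' \<in> Q" by (auto simp: is_frun_snoc)
  have "0 \<le> (of_rat (\<delta> e (lastst \<rho>) a q') :: real)"
    using memdp_distr(1)[OF memdp eE lastst_in[OF fr(1)] fr(2)] .
  then show ?case using 2 fr sigma_props(1)[OF fr(1)] by (simp add: cp_snoc)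
qed

lemma cp_invalid: "\<not> is_frun Q A \<rho> \<Longrightarrow> cp \<rho> = 0"
proof (induction \<rho> rule: frun_snoc_induct)
  case (1 q0) then show ?case using qQ by (auto simp: cp_empty is_frun_def)
next
  case (2 \<rho> a q')
  show ?case
  proof (cases "is_frun Q A \<rho>")
    case False then show ?thesis using 2 by (simp add: cp_snoc)
  next
    case True
    show ?thesis
    proof (cases "a \<in> A")
      case False then show ?thesis using sigma_props(2)[OF True] by (simp add: cp_snoc)
    next
      case aA: True
      then have "q' \<notin> Q" using 2 True by (simp add: is_frun_snoc)
      then have "\<delta> e (lastst \<rho>) a q' = 0"
        using memdp_distr(2)[OF memdp eE lastst_in[OF True] aA] by simp
      then show ?thesis by (simp add: cp_snoc)
    qed
  qed
qed

lemma nsbf_pos: "nsbf E \<delta> b \<epsilon> \<rho> \<Longrightarrow> \<forall>x\<in>E. 0 < lk E \<delta> b \<rho> x"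
  using nsbf_self eps by fastforce

lemma Phi_nonneg: "nsbf E \<delta> b \<epsilon> \<rho> \<Longrightarrow> 0 \<le> Phi \<rho>"
  unfolding Phi_def phi_def
proof (intro sum_nonneg mult_nonneg_nonneg)
  fix x assume "nsbf E \<delta> b \<epsilon> \<rho>" "x \<in> E - {e}"
  then have "0 < lk E \<delta> b \<rho> x" "0 < lk E \<delta> b \<rho> e" using nsbf_pos eE by auto
  then show "0 \<le> sqrt (lk E \<delta> b \<rho> x / lk E \<delta> b \<rho> e)" by simp
qed (use c0 in auto)

lemma w_nonneg: "is_frun Q A \<rho> \<Longrightarrow> 0 \<le> w \<rho>"
  by (simp add: w_def cp_nonneg Phi_nonneg)

lemma step:
  assumes fr: "is_frun Q A \<rho>"
  shows "(\<Sum>a\<in>A. \<Sum>q'\<in>Q. w (snoc \<rho> a q')) \<le> w \<rho>"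
proof (cases "nsbf E \<delta> b \<epsilon> \<rho>")
  case False
  then have "w (snoc \<rho> a q') = 0" for a q' by (simp add: w_def nsbf_snoc)
  then show ?thesis using False by (simp add: w_def)
next
  case True
  let ?s = "lastst \<rho>"
  let ?\<beta> = "lk E \<delta> b \<rho>"
  let ?d = "\<lambda>a q'. (of_rat (\<delta> e ?s a q') :: real)"
  have sQ: "?s \<in> Q" using lastst_in[OF fr] .
  have pos: "\<forall>x\<in>E. 0 < ?\<beta> x" using nsbf_pos[OF True] .
  have Phi_snoc: "Phi (snoc \<rho> a q') = phi E e c (bel_upd E \<delta> ?\<beta> ?s a q')
      (\<lambda>e'. cntf (\<lambda>s a. \<delta> e s a \<noteq> \<delta> e' s a) \<rho> + (if \<delta> e ?s a \<noteq> \<delta> e' ?s a then 1 else 0))" for a q'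
    by (simp add: Phi_def lk_snoc cntf_snoc)
  have ph: "(\<Sum>q'\<in>Q. ?d a q' * Phi (snoc \<rho> a q')) \<le> Phi \<rho>" if aA: "a \<in> A" for a
    unfolding Phi_snoc
    apply (unfold Phi_def)
    apply (rule phi_step[OF memdp eE sQ aA pos c0])
    using aff sQ aA by auto
  have nn: "0 \<le> ?d a q' * Phi (snoc \<rho> a q')" if aA: "a \<in> A" for a q'
    unfolding Phi_snoc by (rule phi_snoc_nonneg[OF memdp eE sQ aA pos c0])
  have trm: "w (snoc \<rho> a q') \<le> cp \<rho> * (\<sigma> \<rho> a * (?d a q' * Phi (snoc \<rho> a q')))" if aA: "a \<in> A" for a q'
  proof -
    have "0 \<le> cp \<rho> * (\<sigma> \<rho> a * (?d a q' * Phi (snoc \<rho> a q')))"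
      using cp_nonneg[OF fr] sigma_props(1)[OF fr] nn[OF aA] by simp
    then show ?thesis by (simp add: w_def cp_snoc mult_ac)
  qed
  have "(\<Sum>a\<in>A. \<Sum>q'\<in>Q. w (snoc \<rho> a q')) \<le> (\<Sum>a\<in>A. \<Sum>q'\<in>Q. cp \<rho> * (\<sigma> \<rho> a * (?d a q' * Phi (snoc \<rho> a q'))))"
    using trm by (intro sum_mono) auto
  also have "\<dots> = cp \<rho> * (\<Sum>a\<in>A. \<sigma> \<rho> a * (\<Sum>q'\<in>Q. ?d a q' * Phi (snoc \<rho> a q')))"
    by (simp add: sum_distrib_left)
  also have "\<dots> \<le> cp \<rho> * (\<Sum>a\<in>A. \<sigma> \<rho> a * Phi \<rho>)"
    using ph cp_nonneg[OF fr] sigma_props(1)[OF fr]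
    by (intro mult_left_mono sum_mono) auto
  also have "\<dots> = cp \<rho> * Phi \<rho>"
    using sigma_props(3)[OF fr] by (simp add: sum_distrib_right[symmetric])
  also have "\<dots> = w \<rho>" using True by (simp add: w_def)
  finally show ?thesis .
qed

lemma F_le: "F n \<le> F 0"
proof (induction n)
  case 0 then show ?case by simp
next
  case (Suc n)
  have "F (Suc n) = (\<Sum>\<rho>\<in>V Q A n. \<Sum>a\<in>A. \<Sum>q'\<in>Q. w (snoc \<rho> a q'))"
    unfolding F_def by (rule sum_V_Suc[OF finQ finA])
  also have "\<dots> \<le> (\<Sum>\<rho>\<in>V Q A n. w \<rho>)"
    by (intro sum_mono step) (simp add: V_def)
  finally show ?case using Suc unfolding F_def by simp
qed

lemma F0_le: "F 0 \<le> real (card E - 1) * sqrt (1 / \<epsilon>)"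
proof -
  have "F 0 = (\<Sum>q0\<in>Q. if q0 = q then w (q, []) else 0)"
    unfolding F_def V_0
    by (subst sum.reindex) (auto simp: inj_on_def w_def cp_empty intro!: sum.cong)
  also have "\<dots> = w (q, [])" using qQ finQ by simp
  also have "\<dots> \<le> real (card E - 1) * sqrt (1 / \<epsilon>)"
  proof (cases "nsbf E \<delta> b \<epsilon> (q, [])")
    case False then show ?thesis using eps by (simp add: w_def)
  next
    case True
    then have be: "\<epsilon> < b e" using eE by (simp add: nsbf_empty)
    have "w (q, []) = (\<Sum>e'\<in>E-{e}. sqrt (b e' / b e))"
      using True by (simp add: w_def cp_empty Phi_def phi_def lk_def)
    also have "\<dots> \<le> (\<Sum>e'\<in>E-{e}. sqrt (1 / \<epsilon>))"
    proof (intro sum_mono real_sqrt_le_mono)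
      fix e' assume e': "e' \<in> E - {e}"
      have "b e' \<le> 1" using bd e' finE member_le_sum[of e' E b] by (auto simp: is_distr_def)
      moreover have "0 \<le> b e'" using bd by (simp add: is_distr_def)
      ultimately show "b e' / b e \<le> 1 / \<epsilon>" using be eps by (simp add: frac_le)
    qed
    also have "\<dots> = real (card E - 1) * sqrt (1 / \<epsilon>)" using eE finE by simp
    finally show ?thesis .
  qed
  finally show ?thesis .
qed

lemma final:
  assumes R: "R \<subseteq> V Q A N"
    and Rp: "\<And>\<rho>. \<rho> \<in> R \<Longrightarrow> nsbf E \<delta> b \<epsilon> \<rho> \<and> (\<exists>e'\<in>E-{e}. J \<le> cntf (\<lambda>s a. \<delta> e s a \<noteq> \<delta> e' s a) \<rho>)"
  shows "(\<Sum>\<rho>\<in>R. cp \<rho>) * (sqrt \<epsilon> * (1/c)^J) \<le> real (card E - 1) * sqrt (1 / \<epsilon>)"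
proof -
  let ?K = "sqrt \<epsilon> * (1/c)^J"
  have "(\<Sum>\<rho>\<in>R. cp \<rho>) * ?K = (\<Sum>\<rho>\<in>R. cp \<rho> * ?K)" by (simp add: sum_distrib_right)
  also have "\<dots> \<le> (\<Sum>\<rho>\<in>R. w \<rho>)"
  proof (intro sum_mono)
    fix \<rho> assume r: "\<rho> \<in> R"
    then have fr: "is_frun Q A \<rho>" using R by (auto simp: V_def)
    obtain e0 where e0: "e0 \<in> E - {e}" "J \<le> cntf (\<lambda>s a. \<delta> e s a \<noteq> \<delta> e0 s a) \<rho>" and ns: "nsbf E \<delta> b \<epsilon> \<rho>"
      using Rp[OF r] by blast
    let ?\<beta> = "lk E \<delta> b \<rho>"
    have pos: "\<forall>x\<in>E. 0 < ?\<beta> x" using nsbf_pos[OF ns] .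
    have sum1: "sum ?\<beta> E = 1" using lk_sum[OF finE] bd by (simp add: is_distr_def)
    have le1: "?\<beta> e \<le> 1" using member_le_sum[of e E ?\<beta>] pos eE finE sum1 by (auto intro: less_imp_le)
    have ge: "\<epsilon> < ?\<beta> e0" using nsbf_self[OF ns] e0 by auto
    have "?\<beta> e0 \<le> ?\<beta> e0 / ?\<beta> e" using le1 pos eE ge eps by (simp add: le_divide_eq)
    then have s1: "sqrt \<epsilon> \<le> sqrt (?\<beta> e0 / ?\<beta> e)" using ge by simp
    have s2: "(1/c)^J \<le> (1/c)^(cntf (\<lambda>s a. \<delta> e s a \<noteq> \<delta> e0 s a) \<rho>)"
      using e0 c0 c1 by (intro power_increasing) auto
    have "?K \<le> sqrt (?\<beta> e0 / ?\<beta> e) * (1/c)^(cntf (\<lambda>s a. \<delta> e s a \<noteq> \<delta> e0 s a) \<rho>)"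
    proof (intro mult_mono s1 s2)
      have "0 < ?\<beta> e0" "0 < ?\<beta> e" using pos e0 eE by auto
      then show "0 \<le> sqrt (?\<beta> e0 / ?\<beta> e)" by simp
    qed (use c0 in auto)
    also have "\<dots> \<le> Phi \<rho>"
      unfolding Phi_def phi_def using e0 finE pos eE c0
      by (intro member_le_sum[of e0 "E - {e}"] mult_nonneg_nonneg) (auto intro!: divide_nonneg_pos less_imp_le)
    finally show "cp \<rho> * ?K \<le> w \<rho>"
      using ns cp_nonneg[OF fr] by (simp add: w_def mult_left_mono)
  qed
  also have "\<dots> \<le> (\<Sum>\<rho>\<in>V Q A N. w \<rho>)"
    using R finite_V[OF finQ finA] w_nonneg by (intro sum_mono2) (auto simp: V_def)
  also have "\<dots> = F N" by (simp add: F_def)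
  also have "\<dots> \<le> F 0" by (rule F_le)
  also have "\<dots> \<le> real (card E - 1) * sqrt (1 / \<epsilon>)" by (rule F0_le)
  finally show ?thesis .
qed

end


lemma cyl_sets:
  assumes "sets M = sets (stream_space (count_space UNIV))"
  shows "cyl \<rho> \<in> sets M"
proof -
  have "{\<omega> \<in> space (stream_space (count_space UNIV)). fst (\<omega> !! 0) = fst \<rho> \<and>
       (\<forall>i < length (snd \<rho>). snd (\<omega> !! i) = fst (snd \<rho> ! i) \<and>
                               fst (\<omega> !! Suc i) = snd (snd \<rho> ! i))} \<in> sets (stream_space (count_space (UNIV :: (nat \<times> nat) set)))"
    by measurable
  then show ?thesis using assms by (simp add: cyl_def space_stream_space streams_UNIV)
qed

lemma prefix_in_cyl: "\<omega> \<in> cyl (prefix_run \<omega> N)"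
  by (simp add: cyl_def prefix_run_def)

lemma cyl_prefix: "\<omega> \<in> cyl \<rho> \<Longrightarrow> \<rho> = prefix_run \<omega> (length (snd \<rho>))"
proof -
  assume c: "\<omega> \<in> cyl \<rho>"
  have "snd \<rho> = snd (prefix_run \<omega> (length (snd \<rho>)))"
  proof (rule nth_equalityI)
    fix i assume "i < length (snd \<rho>)"
    then show "snd \<rho> ! i = snd (prefix_run \<omega> (length (snd \<rho>))) ! i"
      using c by (simp add: cyl_def prefix_run_def prod_eq_iff del: snth.simps)
  qed (simp add: prefix_run_def)
  moreover have "fst \<rho> = fst (prefix_run \<omega> (length (snd \<rho>)))"
    using c by (simp add: cyl_def prefix_run_def)
  ultimately show ?thesis by (simp add: prod_eq_iff)
qed

lemma take_prefix: "n \<le> N \<Longrightarrow> (fst (prefix_run \<omega> N), take n (snd (prefix_run \<omega> N))) = prefix_run \<omega> n"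
  by (simp add: prefix_run_def take_map)

lemma length_prefix[simp]: "length (snd (prefix_run \<omega> N)) = N"
  by (simp add: prefix_run_def)

lemma state_before_prefix: "i \<le> N \<Longrightarrow> state_before (prefix_run \<omega> N) i = fst (\<omega> !! i)"
  by (cases i) (simp_all add: state_before_def prefix_run_def del: snth.simps)

lemma cntf_prefix: "cntf P (prefix_run \<omega> N) = card {i. i < N \<and> P (fst (\<omega> !! i)) (snd (\<omega> !! i))}"
  unfolding cntf_def
proof (rule arg_cong[where f=card], rule Collect_cong)
  fix i
  show "(i < length (snd (prefix_run \<omega> N)) \<and> P (state_before (prefix_run \<omega> N) i) (fst (snd (prefix_run \<omega> N) ! i))) =
        (i < N \<and> P (fst (\<omega> !! i)) (snd (\<omega> !! i)))"
    using state_before_prefix[of i N \<omega>] by (auto simp: prefix_run_def simp del: snth.simps)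
qed

lemma prefix_set_eq: "{\<omega>. P (prefix_run \<omega> N)} = (\<Union>\<rho>\<in>{\<rho>. length (snd \<rho>) = N \<and> P \<rho>}. cyl \<rho>)"
proof (intro set_eqI iffI)
  fix \<omega> assume "\<omega> \<in> {\<omega>. P (prefix_run \<omega> N)}"
  then show "\<omega> \<in> (\<Union>\<rho>\<in>{\<rho>. length (snd \<rho>) = N \<and> P \<rho>}. cyl \<rho>)"
    using prefix_in_cyl[of \<omega> N] by (intro UN_I[of "prefix_run \<omega> N"]) auto
next
  fix \<omega> assume "\<omega> \<in> (\<Union>\<rho>\<in>{\<rho>. length (snd \<rho>) = N \<and> P \<rho>}. cyl \<rho>)"
  then obtain \<rho> where "length (snd \<rho>) = N" "P \<rho>" "\<omega> \<in> cyl \<rho>" by auto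
  then show "\<omega> \<in> {\<omega>. P (prefix_run \<omega> N)}" using cyl_prefix[of \<omega> \<rho>] by auto
qed

lemma prefix_set_sets:
  assumes "sets M = sets (stream_space (count_space UNIV))"
  shows "{\<omega>. P (prefix_run \<omega> N)} \<in> sets M"
  unfolding prefix_set_eq using cyl_sets[OF assms]
  by (intro sets.countable_UN') (auto intro: countableI_type)

lemma pigeon:
  assumes "finite E" "e \<in> E"
  shows "cntf (\<lambda>s a. (s,a) \<in> Dstg Q A E \<delta>) \<rho> \<le> (\<Sum>e'\<in>E-{e}. cntf (\<lambda>s a. \<delta> e s a \<noteq> \<delta> e' s a) \<rho>)"
proof -
  let ?I = "\<lambda>P. {i. i < length (snd \<rho>) \<and> P (state_before \<rho> i) (fst (snd \<rho> ! i))}"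
  have sub: "?I (\<lambda>s a. (s,a) \<in> Dstg Q A E \<delta>) \<subseteq> (\<Union>e'\<in>E-{e}. ?I (\<lambda>s a. \<delta> e s a \<noteq> \<delta> e' s a))"
  proof
    fix i assume "i \<in> ?I (\<lambda>s a. (s,a) \<in> Dstg Q A E \<delta>)"
    then obtain e1 e2 where i: "i < length (snd \<rho>)" "e1 \<in> E" "e2 \<in> E" "e1 \<noteq> e2"
      "\<delta> e1 (state_before \<rho> i) (fst (snd \<rho> ! i)) \<noteq> \<delta> e2 (state_before \<rho> i) (fst (snd \<rho> ! i))"
      by (auto simp: Dstg_def)
    show "i \<in> (\<Union>e'\<in>E-{e}. ?I (\<lambda>s a. \<delta> e s a \<noteq> \<delta> e' s a))"
    proof (cases "\<delta> e (state_before \<rho> i) (fst (snd \<rho> ! i)) = \<delta> e1 (state_before \<rho> i) (fst (snd \<rho> ! i))")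
      case True
      then have "e2 \<noteq> e" using i by auto
      then show ?thesis using i True by auto
    next
      case False
      then have "e1 \<noteq> e" by auto
      then show ?thesis using i False by auto
    qed
  qed
  have "cntf (\<lambda>s a. (s,a) \<in> Dstg Q A E \<delta>) \<rho> \<le> card (\<Union>e'\<in>E-{e}. ?I (\<lambda>s a. \<delta> e s a \<noteq> \<delta> e' s a))"
    unfolding cntf_def using assms by (intro card_mono[OF _ sub]) auto
  also have "\<dots> \<le> (\<Sum>e'\<in>E-{e}. card (?I (\<lambda>s a. \<delta> e s a \<noteq> \<delta> e' s a)))"
    using assms by (intro card_UN_le) auto
  finally show ?thesis by (simp add: cntf_def)
qed


lemma nb_prefix:
  assumes "enat m \<le> nb_dstg Q A E \<delta> \<omega>"
  shows "\<exists>N. m \<le> card {i. i < N \<and> \<omega> !! i \<in> Dstg Q A E \<delta>}"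
proof -
  let ?Z = "{i. \<omega> !! i \<in> Dstg Q A E \<delta>}"
  obtain F where F: "finite F" "card F = m" "F \<subseteq> ?Z"
  proof (cases "finite ?Z")
    case True
    then have "m \<le> card ?Z" using assms by (simp add: nb_dstg_def)
    then show ?thesis using that obtain_subset_with_card_n by metis
  next
    case False
    then show ?thesis using that infinite_arbitrarily_large by metis
  qed
  obtain N where N: "F \<subseteq> {..<N}" using finite_nat_bounded[OF F(1)] by blast
  have "F \<subseteq> {i. i < N \<and> \<omega> !! i \<in> Dstg Q A E \<delta>}" using F N by auto
  then have "card F \<le> card {i. i < N \<and> \<omega> !! i \<in> Dstg Q A E \<delta>}" by (intro card_mono) auto
  then show ?thesis using F by auto
qed

lemma main_bound:
  assumes memdp: "is_MEMDP Q A E \<delta>" and bd: "is_distr E b" and qQ: "q \<in> Q"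
    and strat: "is_strategy Q A \<sigma>" and eE: "e \<in> E" and eps: "0 < \<epsilon>"
    and c0: "0 < c" and c1: "c \<le> 1"
    and aff: "\<forall>s\<in>Q. \<forall>a\<in>A. \<forall>e'\<in>E. \<delta> e s a \<noteq> \<delta> e' s a \<longrightarrow>
       (\<Sum>q'\<in>Q. sqrt (of_rat (\<delta> e s a q') * of_rat (\<delta> e' s a q'))) \<le> c"
    and M: "is_run_measure (\<delta> e) \<sigma> q M"
    and J: "0 < J" and cb: "real (card E - 1) * c ^ J \<le> \<epsilon>^2"
  shows "measure M ({\<omega>. enat (card E * J) \<le> nb_dstg Q A E \<delta> \<omega>} \<inter> NeverSmallBelief E \<delta> b \<epsilon>) \<le> \<epsilon>"
proof -
  interpret run_ctx Q A E \<delta> b q \<sigma> e \<epsilon> c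
    using assms by (simp add: run_ctx_def)
  interpret prob_space M using M by (simp add: is_run_measure_def)
  have sM: "sets M = sets (stream_space (count_space UNIV))" using M by (simp add: is_run_measure_def)
  have mcyl: "measure M (cyl \<rho>) = cp \<rho>" for \<rho>
  proof -
    have "\<forall>\<rho>. measure M (cyl \<rho>) = cyl_prob (\<delta> e) \<sigma> q \<rho>" using M unfolding is_run_measure_def by blast
    then have "measure M (cyl \<rho>) = cyl_prob (\<delta> e) \<sigma> q \<rho>" by blast
    then show ?thesis unfolding cp_def .
  qed
  define m where "m = card E * J"
  define Pd where "Pd = (\<lambda>s a. (s,a) \<in> Dstg Q A E \<delta>)"
  define S where "S = {\<omega>. enat m \<le> nb_dstg Q A E \<delta> \<omega>} \<inter> NeverSmallBelief E \<delta> b \<epsilon>"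
  define T where "T N = {\<omega>. m \<le> cntf Pd (prefix_run \<omega> N)}" for N
  have cntT: "cntf Pd (prefix_run \<omega> N) = card {i. i < N \<and> \<omega> !! i \<in> Dstg Q A E \<delta>}" for \<omega> N
    unfolding cntf_prefix Pd_def by simp
  have bound: "measure M (S \<inter> T N) \<le> \<epsilon>" for N
  proof -
    define R where "R = {\<rho> \<in> V Q A N. m \<le> cntf Pd \<rho> \<and> nsbf E \<delta> b \<epsilon> \<rho>}"
    define Inv where "Inv = {\<rho>. length (snd \<rho>) = N \<and> \<not> is_frun Q A \<rho>}"
    have sub: "S \<inter> T N \<subseteq> (\<Union>\<rho>\<in>R. cyl \<rho>) \<union> (\<Union>\<rho>\<in>Inv. cyl \<rho>)"
    proof
      fix \<omega> assume w: "\<omega> \<in> S \<inter> T N"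
      let ?\<rho> = "prefix_run \<omega> N"
      have inc: "\<omega> \<in> cyl ?\<rho>" by (rule prefix_in_cyl)
      show "\<omega> \<in> (\<Union>\<rho>\<in>R. cyl \<rho>) \<union> (\<Union>\<rho>\<in>Inv. cyl \<rho>)"
      proof (cases "is_frun Q A ?\<rho>")
        case True
        have "nsbf E \<delta> b \<epsilon> ?\<rho>"
          unfolding nsbf_def
        proof (intro allI impI ballI)
          fix n e' assume "n \<le> length (snd ?\<rho>)" "e' \<in> E"
          then show "\<epsilon> < lk E \<delta> b (fst ?\<rho>, take n (snd ?\<rho>)) e'"
            using w take_prefix[of n N \<omega>] by (auto simp: S_def NeverSmallBelief_def)
        qed
        then have "?\<rho> \<in> R" using True w by (auto simp: R_def V_def T_def)
        then show ?thesis using inc by blast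
      next
        case False
        then have "?\<rho> \<in> Inv" by (simp add: Inv_def)
        then show ?thesis using inc by blast
      qed
    qed
    have finR: "finite R"
      by (rule finite_subset[OF _ finite_V[OF finQ finA, of N]]) (auto simp: R_def)
    have U1: "(\<Union>\<rho>\<in>R. cyl \<rho>) \<in> sets M" using finR cyl_sets[OF sM] by auto
    have U2: "(\<Union>\<rho>\<in>Inv. cyl \<rho>) \<in> null_sets M"
    proof (rule null_sets_UN')
      show "countable Inv" by (rule countableI_type)
      fix \<rho> assume "\<rho> \<in> Inv"
      then have "cp \<rho> = 0" by (simp add: Inv_def cp_invalid)
      then show "cyl \<rho> \<in> null_sets M"
        using cyl_sets[OF sM] mcyl by (intro null_setsI) (auto simp: emeasure_eq_measure)
    qed
    have "measure M (S \<inter> T N) \<le> measure M ((\<Union>\<rho>\<in>R. cyl \<rho>) \<union> (\<Union>\<rho>\<in>Inv. cyl \<rho>))"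
      using sub U1 U2 by (intro finite_measure_mono) auto
    also have "\<dots> \<le> measure M (\<Union>\<rho>\<in>R. cyl \<rho>) + measure M (\<Union>\<rho>\<in>Inv. cyl \<rho>)"
      using U1 U2 by (intro measure_Un_le) auto
    also have "\<dots> = measure M (\<Union>\<rho>\<in>R. cyl \<rho>)" using U2 by (simp add: measure_eq_0_null_sets)
    also have "\<dots> \<le> (\<Sum>\<rho>\<in>R. measure M (cyl \<rho>))"
      using finR cyl_sets[OF sM] by (intro measure_UNION_le) auto
    also have "\<dots> = (\<Sum>\<rho>\<in>R. cp \<rho>)" by (simp add: mcyl)
    also have "\<dots> \<le> \<epsilon>"
    proof -
      let ?X = "\<Sum>\<rho>\<in>R. cp \<rho>"
      have X0: "0 \<le> ?X" using cp_nonneg by (intro sum_nonneg) (auto simp: R_def V_def)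
      have fin: "?X * (sqrt \<epsilon> * (1/c)^J) \<le> real (card E - 1) * sqrt (1 / \<epsilon>)"
      proof (rule final)
        show "R \<subseteq> V Q A N" by (auto simp: R_def)
        fix \<rho> assume r: "\<rho> \<in> R"
        show "nsbf E \<delta> b \<epsilon> \<rho> \<and> (\<exists>e'\<in>E-{e}. J \<le> cntf (\<lambda>s a. \<delta> e s a \<noteq> \<delta> e' s a) \<rho>)"
        proof (rule conjI)
          show "nsbf E \<delta> b \<epsilon> \<rho>" using r by (simp add: R_def)
          show "\<exists>e'\<in>E-{e}. J \<le> cntf (\<lambda>s a. \<delta> e s a \<noteq> \<delta> e' s a) \<rho>"
          proof (rule ccontr)
            assume nt: "\<not> ?thesis"
            have lt: "\<forall>e'\<in>E-{e}. cntf (\<lambda>s a. \<delta> e s a \<noteq> \<delta> e' s a) \<rho> \<le> J - 1"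
            proof
              fix e' assume "e' \<in> E - {e}"
              then have "\<not> J \<le> cntf (\<lambda>s a. \<delta> e s a \<noteq> \<delta> e' s a) \<rho>" using nt by blast
              then show "cntf (\<lambda>s a. \<delta> e s a \<noteq> \<delta> e' s a) \<rho> \<le> J - 1" by linarith
            qed
            have "m \<le> cntf Pd \<rho>" using r by (simp add: R_def)
            also have "\<dots> \<le> (\<Sum>e'\<in>E-{e}. cntf (\<lambda>s a. \<delta> e s a \<noteq> \<delta> e' s a) \<rho>)"
              unfolding Pd_def by (rule pigeon[OF finE eE])
            also have "\<dots> \<le> (\<Sum>e'\<in>E-{e}. J - 1)" using lt by (intro sum_mono) auto
            also have "\<dots> = (card E - 1) * (J - 1)" using finE eE by simp
            also have "\<dots> \<le> card E * (J - 1)" by (intro mult_le_mono1) simp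
            also have "\<dots> < card E * J" using J finE eE by (intro mult_less_mono2) (auto simp: card_gt_0_iff)
            finally show False by (simp add: m_def)
          qed
        qed
      qed
      have e1: "sqrt \<epsilon> * sqrt \<epsilon> = \<epsilon>" using eps by simp
      have e2: "(1/c)^J * c^J = 1" using c0 by (simp add: power_mult_distrib[symmetric])
      have e3: "sqrt (1/\<epsilon>) * sqrt \<epsilon> = 1" using eps by (simp add: real_sqrt_divide)
      have "?X * \<epsilon> = ?X * (sqrt \<epsilon> * (1/c)^J) * (sqrt \<epsilon> * c^J)"
      proof -
        have "?X * (sqrt \<epsilon> * (1/c)^J) * (sqrt \<epsilon> * c^J) = ?X * (sqrt \<epsilon> * sqrt \<epsilon>) * ((1/c)^J * c^J)"
          by (simp add: mult_ac)
        also have "\<dots> = ?X * \<epsilon>" unfolding e1 e2 by simp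
        finally show ?thesis by (rule sym)
      qed
      also have "\<dots> \<le> real (card E - 1) * sqrt (1 / \<epsilon>) * (sqrt \<epsilon> * c^J)"
        using fin eps c0 by (intro mult_right_mono) auto
      also have "\<dots> = real (card E - 1) * c^J * (sqrt (1/\<epsilon>) * sqrt \<epsilon>)" by (simp add: mult_ac)
      also have "\<dots> = real (card E - 1) * c^J" using e3 by simp
      also have "\<dots> \<le> \<epsilon> * \<epsilon>" using cb by (simp add: power2_eq_square)
      finally show ?thesis using eps by simp
    qed
    finally show ?thesis .
  qed
  show ?thesis
  proof (cases "S \<in> sets M")
    case False
    then show ?thesis using eps measure_notin_sets[OF False] by (simp add: S_def m_def)
  next
    case True
    have TN: "T N \<in> sets M" for N unfolding T_def by (rule prefix_set_sets[OF sM])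
    have inc: "incseq (\<lambda>N. S \<inter> T N)"
    proof (rule incseq_SucI)
      fix N
      have "card {i. i < N \<and> \<omega> !! i \<in> Dstg Q A E \<delta>} \<le> card {i. i < Suc N \<and> \<omega> !! i \<in> Dstg Q A E \<delta>}" for \<omega>
        by (intro card_mono) auto
      then show "S \<inter> T N \<subseteq> S \<inter> T (Suc N)" by (auto simp: T_def cntT intro: le_trans)
    qed
    have un: "(\<Union>N. S \<inter> T N) = S"
    proof
      show "S \<subseteq> (\<Union>N. S \<inter> T N)"
      proof
        fix \<omega> assume w: "\<omega> \<in> S"
        then obtain N where "m \<le> card {i. i < N \<and> \<omega> !! i \<in> Dstg Q A E \<delta>}"
          using nb_prefix[of m Q A E \<delta> \<omega>] w by (auto simp: S_def)
        then show "\<omega> \<in> (\<Union>N. S \<inter> T N)" using w by (auto simp: T_def cntT)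
      qed
    qed auto
    have "(\<lambda>N. measure M (S \<inter> T N)) \<longlonglongrightarrow> measure M (\<Union>N. S \<inter> T N)"
      using True TN inc by (intro finite_Lim_measure_incseq) auto
    then have "(\<lambda>N. measure M (S \<inter> T N)) \<longlonglongrightarrow> measure M S" using un by simp
    then have "measure M S \<le> \<epsilon>" using bound by (intro LIMSEQ_le_const2) auto
    then show ?thesis by (simp add: S_def m_def)
  qed
qed


lemma c_pow:
  assumes "1 \<le> T"
  shows "(1 - 1 / real T) ^ T \<le> 1 / 2"
proof -
  have T0: "real T > 0" using assms by simp
  have "1 - 1 / real T \<le> exp (- (1 / real T))" using exp_ge_add_one_self[of "- (1 / real T)"] by simp
  moreover have "0 \<le> 1 - 1 / real T" using assms by simp
  ultimately have "(1 - 1 / real T) ^ T \<le> exp (- (1 / real T)) ^ T" by (intro power_mono)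
  also have "\<dots> = exp (real T * (- (1 / real T)))" by (rule exp_of_nat_mult[symmetric])
  also have "\<dots> = exp (-1)" using T0 by simp
  also have "\<dots> = 1 / exp 1" by (simp add: exp_minus field_simps)
  also have "\<dots> \<le> 1 / 2" using exp_ge_add_one_self[of 1] by (intro divide_left_mono) auto
  finally show ?thesis .
qed

lemma x_bound:
  fixes \<epsilon> :: real
  assumes "0 < \<epsilon>" "\<epsilon> < 1"
  shows "1 / \<epsilon> \<le> 2 ^ nat \<lceil>log 2 (1 / \<epsilon>)\<rceil>"
proof -
  have pos: "0 < log 2 (1 / \<epsilon>)" using assms by simp
  have "1 / \<epsilon> = 2 powr (log 2 (1 / \<epsilon>))" using assms by simp
  also have "\<dots> \<le> 2 powr (real (nat \<lceil>log 2 (1 / \<epsilon>)\<rceil>))"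
    using pos by (intro powr_mono) linarith+
  also have "\<dots> = 2 ^ nat \<lceil>log 2 (1 / \<epsilon>)\<rceil>" by (simp add: powr_realpow)
  finally show ?thesis .
qed

lemma cbound:
  fixes \<epsilon> c :: real
  assumes "0 < \<epsilon>" "\<epsilon> < 1" "0 \<le> c" "c ^ T \<le> 1/2"
  shows "real (k - 1) * c ^ (T * (k + 2 * nat \<lceil>log 2 (1 / \<epsilon>)\<rceil>)) \<le> \<epsilon>^2"
proof -
  define x where "x = nat \<lceil>log 2 (1 / \<epsilon>)\<rceil>"
  have "c ^ (T * (k + 2 * x)) = (c ^ T) ^ (k + 2 * x)" by (simp add: power_mult)
  also have "\<dots> \<le> (1/2) ^ (k + 2 * x)" using assms by (intro power_mono) auto
  also have "\<dots> = (1/2)^k * ((1/2)^x)^2" by (simp add: power_add mult.commute[of 2 x] power_mult)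
  finally have h1: "c ^ (T * (k + 2 * x)) \<le> (1/2)^k * ((1/2)^x)^2" .
  have h2: "real (k - 1) * (1/2)^k \<le> 1"
  proof -
    have "real (k - 1) \<le> 2 ^ k"
    proof -
      have "k - 1 < 2 ^ k" using less_exp[of k] by linarith
      then show ?thesis by (metis less_imp_le of_nat_less_iff of_nat_numeral of_nat_power)
    qed
    then show ?thesis by (simp add: power_one_over field_simps)
  qed
  have h3: "(1/2::real)^x \<le> \<epsilon>"
  proof -
    have "1 / \<epsilon> \<le> 2 ^ x" using x_bound[OF assms(1,2)] by (simp add: x_def)
    then show ?thesis using assms(1) by (simp add: power_one_over field_simps)
  qed
  have h3': "((1/2::real)^x)^2 \<le> \<epsilon>^2" using h3 by (intro power_mono) auto
  have "real (k - 1) * c ^ (T * (k + 2 * x)) \<le> real (k - 1) * ((1/2)^k * ((1/2)^x)^2)"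
    using h1 by (intro mult_left_mono) auto
  also have "\<dots> = (real (k - 1) * (1/2)^k) * ((1/2)^x)^2" by (simp add: mult_ac)
  also have "\<dots> \<le> 1 * \<epsilon>^2" using h2 h3' by (intro mult_mono) auto
  finally show ?thesis by (simp add: x_def)
qed

lemma aff_bound:
  assumes memdp: "is_MEMDP Q A E \<delta>" and eE: "e \<in> E" and e'E: "e' \<in> E" and sQ: "s \<in> Q" and aA: "a \<in> A"
    and ne: "\<delta> e s a \<noteq> \<delta> e' s a"
  shows "(\<Sum>q'\<in>Q. sqrt (of_rat (\<delta> e s a q') * of_rat (\<delta> e' s a q'))) \<le> 1 - 1 / real (8 * (2 ^ max_bits Q A E \<delta>) ^ 4)"
proof -
  let ?l = "max_bits Q A E \<delta>"
  obtain q' where q': "\<delta> e s a q' \<noteq> \<delta> e' s a q'" using ne by (auto simp: fun_eq_iff)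
  have q'Q: "q' \<in> Q"
    using q' memdp_distr(2)[OF memdp eE sQ aA] memdp_distr(2)[OF memdp e'E sQ aA] by metis
  have fin: "finite {rat_bits (\<delta> e q a q') | e q a q'. e \<in> E \<and> q \<in> Q \<and> a \<in> A \<and> q' \<in> Q}"
  proof -
    have "{rat_bits (\<delta> e q a q') | e q a q'. e \<in> E \<and> q \<in> Q \<and> a \<in> A \<and> q' \<in> Q}
        \<subseteq> (\<lambda>(e,q,a,q'). rat_bits (\<delta> e q a q')) ` (E \<times> Q \<times> A \<times> Q)"
    proof
      fix y assume "y \<in> {rat_bits (\<delta> e q a q') | e q a q'. e \<in> E \<and> q \<in> Q \<and> a \<in> A \<and> q' \<in> Q}"
      then obtain e1 q1 a1 q1' where "y = rat_bits (\<delta> e1 q1 a1 q1')" "e1 \<in> E" "q1 \<in> Q" "a1 \<in> A" "q1' \<in> Q" by blast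
      then show "y \<in> (\<lambda>(e,q,a,q'). rat_bits (\<delta> e q a q')) ` (E \<times> Q \<times> A \<times> Q)"
        by (intro image_eqI[of _ _ "(e1,q1,a1,q1')"]) auto
    qed
    moreover have "finite (E \<times> Q \<times> A \<times> Q)" using memdp by (simp only: is_MEMDP_def finite_cartesian_product)
    ultimately show ?thesis by (meson finite_imageI finite_subset)
  qed
  have b1: "rat_bits (\<delta> e s a q') \<le> ?l" unfolding max_bits_def
    by (rule Max_ge[OF fin]) (use eE sQ aA q'Q in blast)
  have b2: "rat_bits (\<delta> e' s a q') \<le> ?l" unfolding max_bits_def
    by (rule Max_ge[OF fin]) (use e'E sQ aA q'Q in blast)
  have d: "1 / 4 ^ ?l \<le> \<bar>(of_rat (\<delta> e s a q') :: real) - of_rat (\<delta> e' s a q')\<bar>"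
    by (rule rat_diff[OF b1 b2 q'])
  have "(\<Sum>q'\<in>Q. sqrt (of_rat (\<delta> e s a q') * of_rat (\<delta> e' s a q'))) \<le> 1 - (1 / 4 ^ ?l)^2 / 8"
  proof (rule hellinger[of Q "\<lambda>x. of_rat (\<delta> e s a x)" "\<lambda>x. of_rat (\<delta> e' s a x)" q' "1 / 4 ^ ?l"])
    show "q' \<in> Q" by (rule q'Q)
    show "1 / 4 ^ ?l \<le> \<bar>(of_rat (\<delta> e s a q') :: real) - of_rat (\<delta> e' s a q')\<bar>" by (rule d)
    show "finite Q" using memdp by (simp only: is_MEMDP_def)
    show "\<And>x. x \<in> Q \<Longrightarrow> 0 \<le> (of_rat (\<delta> e s a x) :: real)" using memdp_distr(1)[OF memdp eE sQ aA] by blast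
    show "\<And>x. x \<in> Q \<Longrightarrow> 0 \<le> (of_rat (\<delta> e' s a x) :: real)" using memdp_distr(1)[OF memdp e'E sQ aA] by blast
    show "(\<Sum>x\<in>Q. (of_rat (\<delta> e s a x) :: real)) = 1" using memdp_distr(3)[OF memdp eE sQ aA] .
    show "(\<Sum>x\<in>Q. (of_rat (\<delta> e' s a x) :: real)) = 1" using memdp_distr(3)[OF memdp e'E sQ aA] .
  qed simp
  also have "(1 / 4 ^ ?l)^2 / 8 = 1 / real (8 * (2 ^ ?l) ^ 4)"
  proof -
    have "(4::real) ^ ?l = (2 ^ ?l)^2"
      by (simp add: power2_eq_square power_mult_distrib[symmetric])
    then have "((4::real) ^ ?l)^2 = (2 ^ ?l)^4" by simp
    then show ?thesis by (simp add: power_one_over)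
  qed
  finally show ?thesis .
qed

definition coef :: "nat \<Rightarrow> nat \<Rightarrow> nat \<Rightarrow> real" where
  "coef i j h = (if i = 2 \<and> j = 4 \<and> h = 0 then 8 else if i = 1 \<and> j = 4 \<and> h = 1 then 16 else 0)"

lemma poly3_eval: "poly3 5 coef y1 y2 y3 = 8 * y1^2 * y2^4 + 16 * y1 * y2^4 * y3"
proof -
  have f: "{..<5::nat} = {0,1,2,3,4}" by auto
  show ?thesis unfolding poly3_def f by (simp add: coef_def)
qed


theorem mainTheorem3:
  shows "\<exists>D c. \<forall>Q A E \<delta>. is_MEMDP Q A E \<delta> \<longrightarrow>
    (\<exists>m :: real \<Rightarrow> nat. \<forall>\<epsilon>::real. 0 < \<epsilon> \<and> \<epsilon> < 1 \<longrightarrow>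
       real (m \<epsilon>) \<le> poly3 D c (real (card E)) (2 ^ max_bits Q A E \<delta>)
                        (real (nat \<lceil>log 2 (1 / \<epsilon>)\<rceil>)) \<and>
       (\<forall>b q \<sigma> e M. is_distr E b \<longrightarrow> q \<in> Q \<longrightarrow> is_strategy Q A \<sigma> \<longrightarrow> e \<in> E \<longrightarrow>
          is_run_measure (\<delta> e) \<sigma> q M \<longrightarrow>
          measure M ({\<omega>. enat (m \<epsilon>) \<le> nb_dstg Q A E \<delta> \<omega>} \<inter> NeverSmallBelief E \<delta> b \<epsilon>) \<le> \<epsilon>))"
proof (intro exI[of _ 5] exI[of _ coef] allI impI)
  fix Q A E \<delta> assume memdp: "is_MEMDP Q A E \<delta>"
  define l where "l = max_bits Q A E \<delta>"
  define T :: nat where "T = 8 * (2 ^ l) ^ 4"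
  define c :: real where "c = 1 - 1 / real T"
  define x where "x \<epsilon> = nat \<lceil>log 2 (1 / \<epsilon>)\<rceil>" for \<epsilon> :: real
  define m where "m \<epsilon> = card E * (T * (card E + 2 * x \<epsilon>))" for \<epsilon> :: real
  have T1: "1 \<le> T" by (simp add: T_def)
  have c0: "0 < c"
  proof -
    have "(1::real) \<le> (2^l)^4" by (intro one_le_power) simp
    moreover have "real T = 8 * (2^l)^4" by (simp add: T_def)
    ultimately have "1 < real T" by linarith
    then show ?thesis by (simp add: c_def)
  qed
  have c1: "c \<le> 1" by (simp add: c_def)
  have cT: "c ^ T \<le> 1/2" unfolding c_def by (rule c_pow[OF T1])
  show "\<exists>m :: real \<Rightarrow> nat. \<forall>\<epsilon>::real. 0 < \<epsilon> \<and> \<epsilon> < 1 \<longrightarrow>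
       real (m \<epsilon>) \<le> poly3 5 coef (real (card E)) (2 ^ max_bits Q A E \<delta>)
                        (real (nat \<lceil>log 2 (1 / \<epsilon>)\<rceil>)) \<and>
       (\<forall>b q \<sigma> e M. is_distr E b \<longrightarrow> q \<in> Q \<longrightarrow> is_strategy Q A \<sigma> \<longrightarrow> e \<in> E \<longrightarrow>
          is_run_measure (\<delta> e) \<sigma> q M \<longrightarrow>
          measure M ({\<omega>. enat (m \<epsilon>) \<le> nb_dstg Q A E \<delta> \<omega>} \<inter> NeverSmallBelief E \<delta> b \<epsilon>) \<le> \<epsilon>)"
  proof (intro exI[of _ m] allI impI conjI)
    fix \<epsilon> :: real assume eps: "0 < \<epsilon> \<and> \<epsilon> < 1"
    have "real (m \<epsilon>) = 8 * real (card E)^2 * (2 ^ l)^4 + 16 * real (card E) * (2 ^ l)^4 * real (x \<epsilon>)"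
      by (simp add: m_def T_def power2_eq_square algebra_simps)
    then show "real (m \<epsilon>) \<le> poly3 5 coef (real (card E)) (2 ^ max_bits Q A E \<delta>) (real (nat \<lceil>log 2 (1 / \<epsilon>)\<rceil>))"
      by (simp add: poly3_eval l_def x_def)
    fix b q \<sigma> e M
    assume bd: "is_distr E b" and qQ: "q \<in> Q" and strat: "is_strategy Q A \<sigma>" and eE: "e \<in> E"
      and M: "is_run_measure (\<delta> e) \<sigma> q M"
    have aff: "\<forall>s\<in>Q. \<forall>a\<in>A. \<forall>e'\<in>E. \<delta> e s a \<noteq> \<delta> e' s a \<longrightarrow>
       (\<Sum>q'\<in>Q. sqrt (of_rat (\<delta> e s a q') * of_rat (\<delta> e' s a q'))) \<le> c"
      using aff_bound[OF memdp eE] by (simp add: c_def T_def l_def)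
    have J: "0 < T * (card E + 2 * x \<epsilon>)" using T1 eE memdp
      by (auto simp: is_MEMDP_def card_gt_0_iff)
    have cb: "real (card E - 1) * c ^ (T * (card E + 2 * x \<epsilon>)) \<le> \<epsilon>^2"
      unfolding x_def using eps c0 cT by (intro cbound) auto
    show "measure M ({\<omega>. enat (m \<epsilon>) \<le> nb_dstg Q A E \<delta> \<omega>} \<inter> NeverSmallBelief E \<delta> b \<epsilon>) \<le> \<epsilon>"
      unfolding m_def
      by (rule main_bound[OF memdp bd qQ strat eE _ c0 c1 aff M J cb]) (use eps in simp)
  qed
qed

end
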